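(* Let $G$ be a countable group, let $\mu$ be a non-degenerate probability measure on $G$, and let $\Omega$ be the set of all weights $\omega$ on $G$ such that $\mu$ has finite $\log\omega$-moment and $1/\omega\in\ell^1(G)$. Then the $\mu$-random walk has finite Avez entropy and \[ h(G,\mu)=\inf\{\mathrm{Ly}_\omega(G,\mu):\omega\in\Omega\}. \] Moreover, the infimum is attained at a weight $\bar\omega\in\Omega$ which also satisfies $\bar\omega^{-1}*\bar\omega^{-1}\le d\,\bar\omega^{-1}$ pointwise for some constant $d>0$; for this weight, $h(G,\mu)=\mathrm{Ly}_{\bar\omega}(G,\mu)$.
   Context: $\mu$ is non-degenerate if its support generates $G$ as a semigroup. A weight on $G$ is $\omega:G\to[a,\infty)$, $a>0$, with $\omega(st)\le C\omega(s)\omega(t)$ for some $C>0$ and all $s,t$. Finite $\log\omega$-moment: $\sum_s\mu(s)\log\omega(s)<\infty$. Convolution $f*g(s)=\sum_tf(t)g(t^{-1}s)$; $\mu^{*n}$ is the $n$-fold power. Shannon entropy $H(G,\mu)=-\sum_s\mu(s)\log\mu(s)$; Avez entropy $h(G,\mu)=\lim_n\frac1nH(G,\mu^{*n})$. Lyapunov exponent $\mathrm{Ly}_\omega(G,\mu)=\lim_n\frac1n\sum_s\mu^{*n}(s)\log\omega(s)$.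
   Formalization: The measure $\mu$ is also assumed to have finite Shannon entropy $H(G,\mu)=-\sum_s\mu(s)\log\mu(s)$. The statement above fails without it. *)

theory Defs
  imports "HOL-Analysis.Analysis"
begin

text \<open>The group G is a type of class group_add (the group operation is written +,
  it is NOT assumed commutative; inverse is unary minus, identity 0) and countable.\<close>

definition prob_fun :: "('a \<Rightarrow> real) \<Rightarrow> bool" where
  "prob_fun \<mu> \<longleftrightarrow> (\<forall>s. 0 \<le> \<mu> s) \<and> (\<mu> has_sum 1) UNIV"

definition supp :: "('a \<Rightarrow> real) \<Rightarrow> 'a set" where
  "supp f = {s. f s \<noteq> 0}"

inductive_set sgen :: "'a::group_add set \<Rightarrow> 'a set" for S :: "'a set" where
  base: "s \<in> S \<Longrightarrow> s \<in> sgen S"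
| step: "a \<in> sgen S \<Longrightarrow> b \<in> sgen S \<Longrightarrow> a + b \<in> sgen S"

definition nondegenerate :: "('a::group_add \<Rightarrow> real) \<Rightarrow> bool" where
  "nondegenerate \<mu> \<longleftrightarrow> sgen (supp \<mu>) = UNIV"

definition is_weight :: "('a::group_add \<Rightarrow> real) \<Rightarrow> bool" where
  "is_weight \<omega> \<longleftrightarrow> (\<exists>a>0. \<forall>s. a \<le> \<omega> s) \<and>
     (\<exists>C>0. \<forall>s t. \<omega> (s + t) \<le> C * \<omega> s * \<omega> t)"

definition conv :: "('a::group_add \<Rightarrow> real) \<Rightarrow> ('a \<Rightarrow> real) \<Rightarrow> 'a \<Rightarrow> real" where
  "conv f g s = (\<Sum>\<^sub>\<infinity>t. f t * g (- t + s))"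

fun conv_pow :: "('a::group_add \<Rightarrow> real) \<Rightarrow> nat \<Rightarrow> 'a \<Rightarrow> real" where
  "conv_pow \<mu> 0 = (\<lambda>s. if s = 0 then 1 else 0)"
| "conv_pow \<mu> (Suc n) = conv (conv_pow \<mu> n) \<mu>"

definition shannon_entropy :: "('a \<Rightarrow> real) \<Rightarrow> real" where
  "shannon_entropy p = - (\<Sum>\<^sub>\<infinity>s. p s * ln (p s))"

definition finite_entropy :: "('a \<Rightarrow> real) \<Rightarrow> bool" where
  "finite_entropy p \<longleftrightarrow> (\<lambda>s. p s * ln (p s)) summable_on UNIV"

definition log_moment_finite :: "('a \<Rightarrow> real) \<Rightarrow> ('a \<Rightarrow> real) \<Rightarrow> bool" where
  "log_moment_finite \<mu> \<omega> \<longleftrightarrow> (\<lambda>s. \<mu> s * ln (\<omega> s)) summable_on UNIV"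

definition inv_l1 :: "('a \<Rightarrow> real) \<Rightarrow> bool" where
  "inv_l1 \<omega> \<longleftrightarrow> (\<lambda>s. 1 / \<omega> s) summable_on UNIV"

definition lyap_seq :: "('a::group_add \<Rightarrow> real) \<Rightarrow> ('a \<Rightarrow> real) \<Rightarrow> nat \<Rightarrow> real" where
  "lyap_seq \<omega> \<mu> n = (\<Sum>\<^sub>\<infinity>s. conv_pow \<mu> n s * ln (\<omega> s)) / real n"

definition lyapunov :: "('a::group_add \<Rightarrow> real) \<Rightarrow> ('a \<Rightarrow> real) \<Rightarrow> real" where
  "lyapunov \<omega> \<mu> = lim (lyap_seq \<omega> \<mu>)"

definition avez_seq :: "('a::group_add \<Rightarrow> real) \<Rightarrow> nat \<Rightarrow> real" where
  "avez_seq \<mu> n = shannon_entropy (conv_pow \<mu> n) / real n"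

definition Omega :: "('a::group_add \<Rightarrow> real) \<Rightarrow> ('a \<Rightarrow> real) set" where
  "Omega \<mu> = {\<omega>. is_weight \<omega> \<and> log_moment_finite \<mu> \<omega> \<and> inv_l1 \<omega>}"

end

theory Submission
  imports Defs
begin
lemma has_sum_single_pt:
  "((\<lambda>x. if x = a then c else (0::real)) has_sum c) UNIV"
proof -
  have "((\<lambda>x. if x = a then c else (0::real)) has_sum c) {a}"
    by (simp add: has_sum_finiteI)
  then show ?thesis
    by (subst has_sum_cong_neutral[where T="{a}"]) auto
qed

lemma le_infsum_pt:
  fixes f :: "'b \<Rightarrow> real"
  assumes "f summable_on UNIV" "\<And>x. 0 \<le> f x"
  shows "f a \<le> infsum f UNIV"
proof -
  have "infsum f {a} \<le> infsum f UNIV"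
    by (rule infsum_mono_neutral) (use assms in auto)
  then show ?thesis by simp
qed

lemma prob_funD:
  assumes "prob_fun f"
  shows "0 \<le> f s" "(f has_sum 1) UNIV" "f summable_on UNIV" "infsum f UNIV = 1" "f s \<le> 1"
proof -
  show "0 \<le> f s" "(f has_sum 1) UNIV" using assms by (auto simp: prob_fun_def)
  then show "f summable_on UNIV" "infsum f UNIV = 1"
    using assms by (auto simp: prob_fun_def summable_on_def infsumI)
  then show "f s \<le> 1" using le_infsum_pt[of f s] assms by (auto simp: prob_fun_def)
qed

lemma UNIV_Sigma: "Sigma (UNIV::'a set) (\<lambda>_. (UNIV::'b set)) = UNIV" by auto

lemma prod_summable:
  fixes f :: "'a \<Rightarrow> real" and g :: "'b \<Rightarrow> real"
  assumes f: "f summable_on UNIV" and g: "g summable_on UNIV"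
  shows "(\<lambda>(x,y). f x * g y) summable_on UNIV"
    and "infsum (\<lambda>(x,y). f x * g y) UNIV = infsum f UNIV * infsum g UNIV"
proof -
  have af: "(\<lambda>x. norm (f x)) summable_on UNIV" using f summable_on_iff_abs_summable_on_real by blast
  have ag: "(\<lambda>x. norm (g x)) summable_on UNIV" using g summable_on_iff_abs_summable_on_real by blast
  have "(\<lambda>p. norm ((\<lambda>(x,y). f x * g y) p)) summable_on Sigma UNIV (\<lambda>_. UNIV)"
  proof (rule summable_on_SigmaI[where g="\<lambda>x. norm (f x) * infsum (\<lambda>y. norm (g y)) UNIV"])
    fix x :: 'a
    show "((\<lambda>y. norm ((\<lambda>(x,y). f x * g y) (x, y))) has_sum norm (f x) * infsum (\<lambda>y. norm (g y)) UNIV) UNIV"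
      using has_sum_cmult_right[OF has_sum_infsum[OF ag], of "norm (f x)"] by (simp add: abs_mult)
  next
    show "(\<lambda>x. norm (f x) * infsum (\<lambda>y. norm (g y)) UNIV) summable_on UNIV"
      using summable_on_cmult_left[OF af] by simp
  qed auto
  then have "(\<lambda>p. norm ((\<lambda>(x,y). f x * g y) p)) summable_on UNIV" by (simp add: UNIV_Sigma)
  then show s: "(\<lambda>(x,y). f x * g y) summable_on UNIV" using abs_summable_summable by blast
  have "infsum (\<lambda>(x,y). f x * g y) UNIV = infsum (\<lambda>x. infsum (\<lambda>y. f x * g y) UNIV) UNIV"
    using infsum_Sigma_banach[of "\<lambda>(x,y). f x * g y" UNIV "\<lambda>_. UNIV"] s by (simp add: UNIV_Sigma)
  also have "\<dots> = infsum (\<lambda>x. f x * infsum g UNIV) UNIV"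
    by (simp add: infsum_cmult_right')
  also have "\<dots> = infsum f UNIV * infsum g UNIV" by (simp add: infsum_cmult_left')
  finally show "infsum (\<lambda>(x,y). f x * g y) UNIV = infsum f UNIV * infsum g UNIV" .
qed

lemma conv_inner_summable:
  fixes f g :: "'a::group_add \<Rightarrow> real"
  assumes "prob_fun f" "prob_fun g"
  shows "(\<lambda>t. f t * g (- t + s)) summable_on UNIV"
  by (rule summable_on_comparison_test[OF prob_funD(3)[OF assms(1)]])
     (use prob_funD[OF assms(1)] prob_funD[OF assms(2)] in \<open>auto intro: mult_nonneg_nonneg mult_left_le\<close>)

lemma conv_Phi:
  fixes f g h :: "'a::group_add \<Rightarrow> real"
  assumes pf: "prob_fun f" and pg: "prob_fun g" and h0: "\<And>s. 0 \<le> h s"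
    and sm: "(\<lambda>(x,y). f x * g y * h (x+y)) summable_on UNIV"
  shows "((\<lambda>s. conv f g s * h s) has_sum infsum (\<lambda>(x,y). f x * g y * h (x+y)) UNIV) UNIV"
proof -
  define T where "T = infsum (\<lambda>(x,y). f x * g y * h (x+y)) UNIV"
  have "((\<lambda>(x,y). f x * g y * h (x+y)) has_sum T) UNIV" using sm T_def by simp
  then have "((\<lambda>(x,s). f x * g (-x+s) * h s) has_sum T) UNIV"
    by (subst has_sum_reindex_bij_witness[where j="\<lambda>(x,s). (x, -x+s)" and i="\<lambda>(x,y). (x, x+y)"
          and T=UNIV and h="\<lambda>(x,y). f x * g y * h (x+y)" and s'=T])
       (auto simp: add.assoc)
  then have "((\<lambda>(x,s). f x * g (-x+s) * h s) has_sum T) (UNIV \<times> UNIV)" by simp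
  then have "((\<lambda>(s,x). f x * g (-x+s) * h s) has_sum T) (UNIV \<times> UNIV)"
    by (subst has_sum_swap) (simp add: case_prod_unfold)
  then have H: "((\<lambda>(s,x). f x * g (-x+s) * h s) has_sum T) (Sigma UNIV (\<lambda>_. UNIV))" by simp
  show ?thesis unfolding T_def[symmetric]
  proof (rule has_sum_SigmaD[OF H])
    fix s :: 'a
    have "((\<lambda>t. f t * g (- t + s)) has_sum conv f g s) UNIV"
      unfolding conv_def using conv_inner_summable[OF pf pg] by simp
    from has_sum_cmult_left[OF this, of "h s"]
    show "((\<lambda>x. (\<lambda>(s,x). f x * g (-x+s) * h s) (s, x)) has_sum conv f g s * h s) UNIV" by simp
  qed
qed

lemma conv_prob:
  fixes f g :: "'a::group_add \<Rightarrow> real"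
  assumes pf: "prob_fun f" and pg: "prob_fun g"
  shows "prob_fun (conv f g)"
proof -
  have s: "(\<lambda>(x,y). f x * g y) summable_on UNIV" and i: "infsum (\<lambda>(x,y). f x * g y) UNIV = 1"
    using prod_summable[OF prob_funD(3)[OF pf] prob_funD(3)[OF pg]] prob_funD[OF pf] prob_funD[OF pg] by auto
  have "((\<lambda>s. conv f g s * 1) has_sum 1) UNIV"
    using conv_Phi[OF pf pg, of "\<lambda>_. 1"] s i by simp
  moreover have "0 \<le> conv f g s" for s
    unfolding conv_def by (rule infsum_nonneg) (use prob_funD[OF pf] prob_funD[OF pg] in auto)
  ultimately show ?thesis by (simp add: prob_fun_def)
qed

lemma conv_expect:
  fixes f g L L1 L2 :: "'a::group_add \<Rightarrow> real"
  assumes pf: "prob_fun f" and pg: "prob_fun g"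
    and lb: "\<And>s. - B \<le> L s"
    and s1: "(\<lambda>x. f x * L1 x) summable_on UNIV"
    and s2: "(\<lambda>y. g y * L2 y) summable_on UNIV"
    and le: "\<And>x y. L (x+y) \<le> L1 x + L2 y"
  shows "(\<lambda>s. conv f g s * L s) summable_on UNIV"
    and "infsum (\<lambda>s. conv f g s * L s) UNIV \<le> infsum (\<lambda>x. f x * L1 x) UNIV + infsum (\<lambda>y. g y * L2 y) UNIV"
proof -
  note F = prob_funD[OF pf] and G = prob_funD[OF pg]
  define h where "h s = L s + B" for s
  have h0: "0 \<le> h s" for s using lb[of s] by (simp add: h_def)
  define \<Psi> where "\<Psi> = (\<lambda>(x,y). (f x * L1 x) * g y + f x * (g y * L2 y) + B * (f x * g y))"
  have p1: "(\<lambda>(x,y). (f x * L1 x) * g y) summable_on UNIV"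
     "infsum (\<lambda>(x,y). (f x * L1 x) * g y) UNIV = infsum (\<lambda>x. f x * L1 x) UNIV"
    using prod_summable[OF s1 G(3)] G by auto
  have p2: "(\<lambda>(x,y). f x * (g y * L2 y)) summable_on UNIV"
     "infsum (\<lambda>(x,y). f x * (g y * L2 y)) UNIV = infsum (\<lambda>y. g y * L2 y) UNIV"
    using prod_summable[OF F(3) s2] F by auto
  have p3: "(\<lambda>(x,y). f x * g y) summable_on UNIV"
     "infsum (\<lambda>(x,y). f x * g y) UNIV = 1"
    using prod_summable[OF F(3) G(3)] F G by auto
  have p3': "(\<lambda>(x,y). B * (f x * g y)) summable_on UNIV"
     "infsum (\<lambda>(x,y). B * (f x * g y)) UNIV = B"
    using summable_on_cmult_right[OF p3(1), of B] infsum_cmult_right'[of B "\<lambda>(x,y). f x * g y" UNIV] p3(2)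
    by (auto simp: case_prod_unfold)
  have sP: "\<Psi> summable_on UNIV" unfolding \<Psi>_def
    using summable_on_add[OF summable_on_add[OF p1(1) p2(1)] p3'(1)] by (simp add: case_prod_unfold)
  have iP: "infsum \<Psi> UNIV = infsum (\<lambda>x. f x * L1 x) UNIV + infsum (\<lambda>y. g y * L2 y) UNIV + B"
    unfolding \<Psi>_def
    using infsum_add[OF summable_on_add[OF p1(1) p2(1)] p3'(1)] infsum_add[OF p1(1) p2(1)] p1(2) p2(2) p3'(2)
    by (simp add: case_prod_unfold)
  define \<Phi> where "\<Phi> = (\<lambda>(x,y). f x * g y * h (x+y))"
  have \<Phi>le: "\<Phi> p \<le> \<Psi> p" for p
  proof -
    obtain x y where p: "p = (x,y)" by (cases p)
    have "0 \<le> f x * g y" using F G by simp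
    moreover have "h (x+y) \<le> L1 x + L2 y + B" using le[of x y] by (simp add: h_def)
    ultimately have "f x * g y * h (x+y) \<le> f x * g y * (L1 x + L2 y + B)" by (simp add: mult_left_mono)
    then show ?thesis by (simp add: p \<Phi>_def \<Psi>_def algebra_simps)
  qed
  have \<Phi>0: "0 \<le> \<Phi> p" for p using F G h0 by (auto simp: \<Phi>_def case_prod_unfold)
  have s\<Phi>: "\<Phi> summable_on UNIV" by (rule summable_on_comparison_test[OF sP \<Phi>le \<Phi>0])
  have i\<Phi>: "infsum \<Phi> UNIV \<le> infsum \<Psi> UNIV" by (rule infsum_mono[OF s\<Phi> sP \<Phi>le])
  have hs: "((\<lambda>s. conv f g s * h s) has_sum infsum \<Phi> UNIV) UNIV"
    using conv_Phi[OF pf pg, of h] h0 s\<Phi> unfolding \<Phi>_def by simp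
  have pc: "(conv f g has_sum 1) UNIV" using prob_funD(2)[OF conv_prob[OF pf pg]] .
  have "((\<lambda>s. conv f g s * h s + (- B) * conv f g s) has_sum (infsum \<Phi> UNIV + (- B) * 1)) UNIV"
    by (rule has_sum_add[OF hs has_sum_cmult_right[OF pc]])
  moreover have "(\<lambda>s. conv f g s * h s + (- B) * conv f g s) = (\<lambda>s. conv f g s * L s)"
    by (auto simp: h_def algebra_simps)
  ultimately have "((\<lambda>s. conv f g s * L s) has_sum (infsum \<Phi> UNIV - B)) UNIV" by simp
  then show "(\<lambda>s. conv f g s * L s) summable_on UNIV"
    and "infsum (\<lambda>s. conv f g s * L s) UNIV \<le> infsum (\<lambda>x. f x * L1 x) UNIV + infsum (\<lambda>y. g y * L2 y) UNIV"
    using i\<Phi> iP by (auto simp: summable_on_def infsumI)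
qed

definition dlt :: "'a::group_add \<Rightarrow> real" where "dlt = (\<lambda>s. if s = 0 then 1 else 0)"

lemma dlt_prob: "prob_fun (dlt :: 'a::group_add \<Rightarrow> real)"
  unfolding prob_fun_def dlt_def using has_sum_single_pt[of 0 1] by auto

lemma neg_add_zero_iff: "(-t + s = (0::'a::group_add)) = (t = s)"
  by (metis add_minus_cancel add.right_neutral left_minus)

lemma conv_pow_0: "conv_pow \<mu> 0 = dlt" by (simp add: dlt_def)

lemma conv_dlt_right: "conv f dlt = f"
proof
  fix s
  have "conv f dlt s = infsum (\<lambda>t. if t = s then f s else 0) UNIV"
    unfolding conv_def dlt_def by (intro infsum_cong) (auto simp: neg_add_zero_iff)
  also have "\<dots> = f s" using has_sum_single_pt[of s "f s"] by (simp add: infsumI)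
  finally show "conv f dlt s = f s" .
qed

lemma conv_dlt_left:
  fixes f :: "'a::group_add \<Rightarrow> real"
  shows "conv dlt f = f"
proof
  fix s
  have "conv dlt f s = infsum (\<lambda>t::'a. if t = 0 then f s else 0) UNIV"
    unfolding conv_def dlt_def
    by (rule arg_cong[where f="\<lambda>h. infsum h UNIV"]) auto
  also have "\<dots> = f s" using has_sum_single_pt[of "0::'a" "f s"] by (simp add: infsumI)
  finally show "conv dlt f s = f s" .
qed

lemma P_prob: "prob_fun \<mu> \<Longrightarrow> prob_fun (conv_pow \<mu> n)"
  by (induction n) (auto simp: dlt_prob conv_prob simp flip: dlt_def)

lemma conv_assoc:
  fixes f g k :: "'a::group_add \<Rightarrow> real"
  assumes pf: "prob_fun f" and pg: "prob_fun g" and pk: "prob_fun k"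
  shows "conv (conv f g) k = conv f (conv g k)"
proof
  fix s
  note F = prob_funD[OF pf] and G = prob_funD[OF pg] and K = prob_funD[OF pk]
  have s0: "(\<lambda>(x,y). f x * g y) summable_on UNIV"
    using prod_summable[OF F(3) G(3)] by auto
  have s1: "(\<lambda>(t,u). f u * g (-u+t)) summable_on UNIV"
    using s0 by (subst summable_on_reindex_bij_witness[where j="\<lambda>(t,u). (u, -u+t)"
          and i="\<lambda>(x,y). (x+y, x)" and T=UNIV and h="\<lambda>(x,y). f x * g y"])
       (auto simp: add.assoc)
  have s2: "(\<lambda>(t,u). f u * g (-u+t) * k (-t+s)) summable_on UNIV"
    by (rule summable_on_comparison_test[OF s1])
       (use F G K in \<open>auto intro!: mult_left_le simp: case_prod_unfold\<close>)
  have "conv (conv f g) k s = infsum (\<lambda>t. infsum (\<lambda>u. f u * g (-u+t) * k (-t+s)) UNIV) UNIV"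
    unfolding conv_def by (simp add: infsum_cmult_left')
  also have "\<dots> = infsum (\<lambda>u. infsum (\<lambda>t. f u * g (-u+t) * k (-t+s)) UNIV) UNIV"
    by (rule infsum_swap_banach) (use s2 in simp)
  also have "\<dots> = infsum (\<lambda>u. f u * infsum (\<lambda>t. g (-u+t) * k (-t+s)) UNIV) UNIV"
    by (simp add: infsum_cmult_right' mult.assoc)
  also have "\<dots> = infsum (\<lambda>u. f u * infsum (\<lambda>v. g v * k (-v + (-u+s))) UNIV) UNIV"
  proof -
    have "infsum (\<lambda>t. g (-u+t) * k (-t+s)) UNIV = infsum (\<lambda>v. g v * k (-v + (-u+s))) UNIV" for u
      by (rule infsum_reindex_bij_witness[where j="\<lambda>t. -u+t" and i="\<lambda>v. u+v"])
         (auto simp: add.assoc minus_add)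
    then show ?thesis by simp
  qed
  also have "\<dots> = conv f (conv g k) s" unfolding conv_def by simp
  finally show "conv (conv f g) k s = conv f (conv g k) s" .
qed

lemma P_add:
  assumes "prob_fun \<mu>"
  shows "conv_pow \<mu> (n+m) = conv (conv_pow \<mu> n) (conv_pow \<mu> m)"
proof (induction m)
  case 0 then show ?case by (simp add: conv_dlt_right flip: dlt_def)
next
  case (Suc m)
  then show ?case using conv_assoc[OF P_prob[OF assms] P_prob[OF assms] assms] by simp
qed

lemma P_1: "conv_pow \<mu> 1 = \<mu>"
  by (simp add: conv_dlt_left flip: dlt_def)

lemma P_mul_le:
  assumes "prob_fun \<mu>"
  shows "conv_pow \<mu> n a * conv_pow \<mu> m b \<le> conv_pow \<mu> (n+m) (a+b)"
proof -
  note pn = P_prob[OF assms, of n] and pm = P_prob[OF assms, of m]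
  have "conv_pow \<mu> n a * conv_pow \<mu> m (-a + (a+b)) \<le> conv (conv_pow \<mu> n) (conv_pow \<mu> m) (a+b)"
    unfolding conv_def
    by (rule le_infsum_pt[OF conv_inner_summable[OF pn pm]])
       (use prob_funD[OF pn] prob_funD[OF pm] in simp)
  then show ?thesis by (simp add: P_add[OF assms] add.assoc[symmetric])
qed

lemma subadd_decomp:
  fixes b :: "nat \<Rightarrow> real"
  assumes sub: "\<And>n m. b (n+m) \<le> b n + b m"
  shows "b (q*k + r) \<le> real q * b k + b r"
proof (induction q)
  case 0 then show ?case by simp
next
  case (Suc q)
  have "b (Suc q * k + r) = b (k + (q*k + r))" by (simp add: add.assoc)
  also have "\<dots> \<le> b k + b (q*k+r)" by (rule sub)
  also have "\<dots> \<le> b k + (real q * b k + b r)" using Suc by simp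
  finally show ?case by (simp add: algebra_simps)
qed

lemma fekete:
  fixes b :: "nat \<Rightarrow> real"
  assumes sub: "\<And>n m. b (n+m) \<le> b n + b m" and lbd: "\<And>n. K \<le> b n"
  shows "(\<lambda>n. b n / real n) \<longlonglongrightarrow> (INF n\<in>{1..}. b n / real n)"
proof -
  define L where "L = (INF n\<in>{1..}. b n / real n)"
  have lbn: "min K 0 \<le> b n / real n" if "n \<ge> 1" for n
  proof -
    have "min K 0 * real n \<le> min K 0 * 1" using that by (intro mult_left_mono_neg) auto
    also have "\<dots> \<le> b n" using lbd[of n] by simp
    finally show ?thesis using that by (simp add: pos_le_divide_eq)
  qed
  have bdd: "bdd_below ((\<lambda>n. b n / real n) ` {1..})"
    using lbn by (intro bdd_belowI[of _ "min K 0"]) auto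
  have low: "L \<le> b n / real n" if "n \<ge> 1" for n
    unfolding L_def using that bdd by (intro cINF_lower) auto
  show ?thesis unfolding L_def[symmetric]
  proof (rule LIMSEQ_I)
    fix e :: real assume e: "0 < e"
    have "L < L + e/2" using e by simp
    then have "\<exists>k\<in>{1..}. b k / real k < L + e/2"
      unfolding L_def using cINF_less_iff[OF _ bdd] by blast
    then obtain k where k: "k \<ge> 1" "b k / real k < L + e/2" by auto
    define D where "D = \<bar>b k\<bar> + (\<Sum>r<k. \<bar>b r\<bar>)"
    have D0: "0 \<le> D" unfolding D_def by (intro add_nonneg_nonneg sum_nonneg) auto
    define N where "N = nat \<lceil>2*D/e\<rceil> + 1"
    have "\<forall>n\<ge>N. norm (b n / real n - L) < e"
    proof (intro allI impI)
      fix n assume nN: "N \<le> n"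
      have n1: "n \<ge> 1" using nN by (simp add: N_def)
      have nD: "2*D/e < real n" using nN unfolding N_def by linarith
      define q where "q = n div k"
      define r where "r = n mod k"
      have nqr: "n = q*k + r" unfolding q_def r_def by simp
      have rk: "r < k" unfolding r_def using k by simp
      have br: "\<bar>b r\<bar> \<le> (\<Sum>r<k. \<bar>b r\<bar>)"
        by (rule member_le_sum) (use rk in auto)
      have "b n \<le> real q * b k + b r" using subadd_decomp[OF sub, of q k r] nqr by simp
      moreover have "real q * b k \<le> real n * (b k / real k) + \<bar>b k\<bar>"
      proof (cases "b k \<ge> 0")
        case True
        have "real q * real k \<le> real n" using nqr by (metis of_nat_le_iff of_nat_mult le_add1)
        then have "real q * real k * (b k / real k) \<le> real n * (b k / real k)"
          using True k by (intro mult_right_mono) auto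
        then show ?thesis using k by simp
      next
        case False
        have "real n \<le> real q * real k + real k" using nqr rk
          by (metis add_le_mono less_or_eq_imp_le of_nat_add of_nat_le_iff of_nat_mult)
        then have "real n - real k \<le> real q * real k" by simp
        then have "real q * real k * (b k / real k) \<le> (real n - real k) * (b k / real k)"
          using False k by (intro mult_right_mono_neg) (auto simp: divide_nonpos_pos)
        moreover have "(real n - real k) * (b k / real k) = real n * (b k / real k) - b k"
          using k by (simp add: field_simps)
        ultimately show ?thesis using k False by simp
      qed
      ultimately have "b n \<le> real n * (b k / real k) + D" using br unfolding D_def by linarith
      then have "b n / real n \<le> (real n * (b k / real k) + D) / real n"
        using n1 by (intro divide_right_mono) auto
      also have "\<dots> = b k / real k + D / real n" using n1 by (simp add: add_divide_distrib)
      finally have "b n / real n \<le> b k / real k + D / real n" .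
      moreover have "D / real n < e / 2" using nD e n1 by (simp add: divide_simps algebra_simps)
      ultimately have "b n / real n < L + e" using k by linarith
      moreover have "L \<le> b n / real n" using low n1 by simp
      ultimately show "norm (b n / real n - L) < e" using e by simp
    qed
    then show "\<exists>no. \<forall>n\<ge>no. norm (b n / real n - L) < e" by blast
  qed
qed

lemma summable_on_diff':
  fixes f g :: "'a \<Rightarrow> real"
  assumes "f summable_on A" "g summable_on A"
  shows "(\<lambda>x. f x - g x) summable_on A"
  using summable_on_add[OF assms(1) summable_on_uminus[THEN iffD2, OF assms(2)]] by simp

lemma infsum_diff':
  fixes f g :: "'a \<Rightarrow> real"
  assumes "f summable_on A" "g summable_on A"
  shows "infsum (\<lambda>x. f x - g x) A = infsum f A - infsum g A"
  using infsum_add[OF assms(1) summable_on_uminus[THEN iffD2, OF assms(2)]] by (simp add: infsum_uminus)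

lemma weight_props:
  assumes "is_weight \<omega>"
  obtains a C where "a > 0" "C > 0" "\<And>s. a \<le> \<omega> s" "\<And>s. 0 < \<omega> s"
    "\<And>s t. ln (\<omega> (s+t)) \<le> ln C + ln (\<omega> s) + ln (\<omega> t)" "\<And>s. ln a \<le> ln (\<omega> s)"
proof -
  from assms obtain a C where a: "a > 0" "\<And>s. a \<le> \<omega> s" and C: "C > 0" "\<And>s t. \<omega> (s+t) \<le> C * \<omega> s * \<omega> t"
    unfolding is_weight_def by blast
  have pos: "0 < \<omega> s" for s using a(1) a(2)[of s] by linarith
  have "ln (\<omega> (s+t)) \<le> ln C + ln (\<omega> s) + ln (\<omega> t)" for s t
  proof -
    have "ln (\<omega> (s+t)) \<le> ln (C * \<omega> s * \<omega> t)" using C pos by simp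
    also have "\<dots> = ln C + ln (\<omega> s) + ln (\<omega> t)" using C pos[of s] pos[of t] by (simp add: ln_mult)
    finally show ?thesis .
  qed
  moreover have "ln a \<le> ln (\<omega> s)" for s using a(1) a(2)[of s] by simp
  ultimately show ?thesis using that a C pos by blast
qed

definition Aw :: "('a::group_add \<Rightarrow> real) \<Rightarrow> ('a \<Rightarrow> real) \<Rightarrow> nat \<Rightarrow> real" where
  "Aw \<omega> \<mu> n = infsum (\<lambda>s. conv_pow \<mu> n s * ln (\<omega> s)) UNIV"

lemma dlt_times_summable: "(\<lambda>s. dlt s * (c s :: real)) summable_on UNIV"
proof -
  have "(\<lambda>s. dlt s * c s) = (\<lambda>s. if s = 0 then c 0 else 0)" by (auto simp: dlt_def)
  then show ?thesis using has_sum_single_pt[of 0 "c 0"] by (auto simp: summable_on_def)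
qed

lemma A_summable:
  fixes \<mu> :: "'a::group_add \<Rightarrow> real"
  assumes pm: "prob_fun \<mu>" and w: "is_weight \<omega>" and lm: "log_moment_finite \<mu> \<omega>"
  shows "(\<lambda>s. conv_pow \<mu> n s * ln (\<omega> s)) summable_on UNIV"
proof -
  obtain a C where wp: "a > 0" "C > 0" "\<And>s. a \<le> \<omega> s" "\<And>s. 0 < \<omega> s"
    "\<And>s t. ln (\<omega> (s+t)) \<le> ln C + ln (\<omega> s) + ln (\<omega> t)" "\<And>s. ln a \<le> ln (\<omega> s)"
    using weight_props[OF w] by blast
  show ?thesis
  proof (induction n)
    case 0 then show ?case using dlt_times_summable by (simp flip: dlt_def)
  next
    case (Suc n)
    have s1: "(\<lambda>x. conv_pow \<mu> n x * (ln C + ln (\<omega> x))) summable_on UNIV"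
      using summable_on_add[OF summable_on_cmult_left[OF prob_funD(3)[OF P_prob[OF pm, of n]], of "ln C"] Suc]
      by (simp add: algebra_simps)
    show ?case
      using conv_expect(1)[OF P_prob[OF pm, of n] pm, of "- ln a" "\<lambda>s. ln (\<omega> s)" "\<lambda>x. ln C + ln (\<omega> x)" "\<lambda>s. ln (\<omega> s)"]
        s1 lm wp(5,6) unfolding log_moment_finite_def by (simp add: add.assoc)
  qed
qed

lemma A_sub:
  fixes \<mu> :: "'a::group_add \<Rightarrow> real"
  assumes pm: "prob_fun \<mu>" and w: "is_weight \<omega>" and lm: "log_moment_finite \<mu> \<omega>"
    and C: "C > 0" "\<And>s t. ln (\<omega> (s+t)) \<le> ln C + ln (\<omega> s) + ln (\<omega> t)"
    and a: "\<And>s. ln a \<le> ln (\<omega> s)"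
  shows "Aw \<omega> \<mu> (n+m) \<le> ln C + Aw \<omega> \<mu> n + Aw \<omega> \<mu> m"
proof -
  note sn = A_summable[OF pm w lm, of n] and sm = A_summable[OF pm w lm, of m]
  note pn = prob_funD[OF P_prob[OF pm, of n]]
  have s1: "(\<lambda>x. conv_pow \<mu> n x * (ln C + ln (\<omega> x))) summable_on UNIV"
    and i1: "infsum (\<lambda>x. conv_pow \<mu> n x * (ln C + ln (\<omega> x))) UNIV = ln C + Aw \<omega> \<mu> n"
  proof -
    have e: "(\<lambda>x. conv_pow \<mu> n x * (ln C + ln (\<omega> x))) = (\<lambda>x. conv_pow \<mu> n x * ln C + conv_pow \<mu> n x * ln (\<omega> x))"
      by (simp add: algebra_simps)
    show "(\<lambda>x. conv_pow \<mu> n x * (ln C + ln (\<omega> x))) summable_on UNIV"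
      unfolding e by (rule summable_on_add[OF summable_on_cmult_left[OF pn(3)] sn])
    show "infsum (\<lambda>x. conv_pow \<mu> n x * (ln C + ln (\<omega> x))) UNIV = ln C + Aw \<omega> \<mu> n"
      unfolding e Aw_def using infsum_add[OF summable_on_cmult_left[OF pn(3)] sn] pn(4)
      by (simp add: infsum_cmult_left')
  qed
  have "Aw \<omega> \<mu> (n+m) = infsum (\<lambda>s. conv (conv_pow \<mu> n) (conv_pow \<mu> m) s * ln (\<omega> s)) UNIV"
    unfolding Aw_def P_add[OF pm] ..
  also have "\<dots> \<le> (ln C + Aw \<omega> \<mu> n) + Aw \<omega> \<mu> m"
    using conv_expect(2)[OF P_prob[OF pm, of n] P_prob[OF pm, of m], of "- ln a" "\<lambda>s. ln (\<omega> s)"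
        "\<lambda>x. ln C + ln (\<omega> x)" "\<lambda>s. ln (\<omega> s)"] s1 i1 sm a C(2)
    unfolding Aw_def by (simp add: add.assoc)
  finally show ?thesis by simp
qed

lemma A_lb:
  fixes \<mu> :: "'a::group_add \<Rightarrow> real"
  assumes pm: "prob_fun \<mu>" and w: "is_weight \<omega>" and lm: "log_moment_finite \<mu> \<omega>"
    and a: "\<And>s. ln a \<le> ln (\<omega> s)"
  shows "ln a \<le> Aw \<omega> \<mu> n"
proof -
  note pn = prob_funD[OF P_prob[OF pm, of n]]
  have "infsum (\<lambda>s. conv_pow \<mu> n s * ln a) UNIV \<le> Aw \<omega> \<mu> n"
    unfolding Aw_def
    by (rule infsum_mono[OF summable_on_cmult_left[OF pn(3)] A_summable[OF pm w lm]])
       (use pn a in \<open>auto intro: mult_left_mono\<close>)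
  then show ?thesis using pn(4) by (simp add: infsum_cmult_left')
qed

lemma lyap_converges:
  fixes \<mu> :: "'a::group_add \<Rightarrow> real"
  assumes pm: "prob_fun \<mu>" and w: "is_weight \<omega>" and lm: "log_moment_finite \<mu> \<omega>"
  shows "\<exists>L. lyap_seq \<omega> \<mu> \<longlonglongrightarrow> L"
proof -
  obtain a C where wp: "a > 0" "C > 0" "\<And>s. a \<le> \<omega> s" "\<And>s. 0 < \<omega> s"
    "\<And>s t. ln (\<omega> (s+t)) \<le> ln C + ln (\<omega> s) + ln (\<omega> t)" "\<And>s. ln a \<le> ln (\<omega> s)"
    using weight_props[OF w] by blast
  define b where "b n = Aw \<omega> \<mu> n + ln C" for n
  have "(\<lambda>n. b n / real n) \<longlonglongrightarrow> (INF n\<in>{1..}. b n / real n)"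
  proof (rule fekete[of b "ln a + ln C"])
    fix n m show "b (n+m) \<le> b n + b m" unfolding b_def using A_sub[OF pm w lm wp(2,5,6), of n m] by simp
  next
    fix n show "ln a + ln C \<le> b n" unfolding b_def using A_lb[OF pm w lm wp(6), of n] by simp
  qed
  then have "(\<lambda>n. b n / real n - ln C / real n) \<longlonglongrightarrow> (INF n\<in>{1..}. b n / real n) - 0"
    by (intro tendsto_diff lim_const_over_n)
  moreover have "(\<lambda>n. b n / real n - ln C / real n) = lyap_seq \<omega> \<mu>"
    by (auto simp: b_def lyap_seq_def Aw_def diff_divide_distrib[symmetric])
  ultimately show ?thesis by auto
qed

lemma gibbs:
  fixes p \<omega> :: "'a \<Rightarrow> real"
  assumes pp: "prob_fun p" and wpos: "\<And>s. 0 < \<omega> s"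
    and sl: "(\<lambda>s. p s * ln (\<omega> s)) summable_on UNIV" and si: "(\<lambda>s. 1 / \<omega> s) summable_on UNIV"
  shows "(\<lambda>s. p s * ln (p s)) summable_on UNIV"
    and "shannon_entropy p \<le> infsum (\<lambda>s. p s * ln (\<omega> s)) UNIV + infsum (\<lambda>s. 1 / \<omega> s) UNIV - 1"
proof -
  note P = prob_funD[OF pp]
  have pt: "- (p s * ln (p s)) \<le> p s * ln (\<omega> s) + 1 / \<omega> s - p s" for s
  proof (cases "p s = 0")
    case True then show ?thesis using wpos[of s] by simp
  next
    case False
    then have ps: "p s > 0" using P(1)[of s] by simp
    have "ln (1 / (p s * \<omega> s)) \<le> 1 / (p s * \<omega> s) - 1"
      using ps wpos[of s] by (intro ln_le_minus_one) simp
    then have "- ln (p s) - ln (\<omega> s) \<le> 1 / (p s * \<omega> s) - 1"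
      using ps wpos[of s] by (simp add: ln_div ln_mult)
    then have "p s * (- ln (p s) - ln (\<omega> s)) \<le> p s * (1 / (p s * \<omega> s) - 1)"
      using ps by (intro mult_left_mono) auto
    then show ?thesis using ps by (simp add: algebra_simps)
  qed
  have nn: "0 \<le> - (p s * ln (p s))" for s
  proof (cases "p s = 0")
    case False
    then have "p s > 0" using P(1)[of s] by simp
    then have "ln (p s) \<le> 0" using P(5)[of s] by simp
    then show ?thesis using P(1)[of s] by (simp add: mult_nonneg_nonpos)
  qed simp
  have sg: "(\<lambda>s. p s * ln (\<omega> s) + 1 / \<omega> s - p s) summable_on UNIV"
    using summable_on_diff'[OF summable_on_add[OF sl si] P(3)] by simp
  have s1: "(\<lambda>s. - (p s * ln (p s))) summable_on UNIV"
    by (rule summable_on_comparison_test[OF sg pt nn])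
  then show s2: "(\<lambda>s. p s * ln (p s)) summable_on UNIV" using summable_on_uminus by blast
  have "shannon_entropy p = infsum (\<lambda>s. - (p s * ln (p s))) UNIV"
    unfolding shannon_entropy_def by (simp add: infsum_uminus)
  also have "\<dots> \<le> infsum (\<lambda>s. p s * ln (\<omega> s) + 1 / \<omega> s - p s) UNIV"
    by (rule infsum_mono[OF s1 sg pt])
  also have "\<dots> = infsum (\<lambda>s. p s * ln (\<omega> s)) UNIV + infsum (\<lambda>s. 1 / \<omega> s) UNIV - 1"
    using infsum_diff'[OF summable_on_add[OF sl si] P(3)] infsum_add[OF sl si] P(4) by simp
  finally show "shannon_entropy p \<le> infsum (\<lambda>s. p s * ln (\<omega> s)) UNIV + infsum (\<lambda>s. 1 / \<omega> s) UNIV - 1" .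
qed

definition aa :: "nat \<Rightarrow> real" where "aa k = 1 / (real k + 1)^2"

lemma aa_pos: "0 < aa k" by (simp add: aa_def)

lemma aa_summable: "aa summable_on UNIV"
proof -
  have "summable (\<lambda>n. 1 / (real n + 1)^2)" using sums_summable[OF inverse_squares_sums] by (simp add: add.commute)
  then show ?thesis unfolding aa_def by (rule summable_nonneg_imp_summable_on) simp
qed

lemma aa_partial: "(\<Sum>k\<le>n. aa k) \<le> 2 - 1 / (real n + 1)"
proof (induction n)
  case 0 then show ?case by (simp add: aa_def)
next
  case (Suc n)
  have e: "1 / (real n + 1) - 1 / (real n + 2) = 1 / ((real n + 1) * (real n + 2))"
    by (simp add: field_simps)
  have "1 / (real n + 2)^2 \<le> 1 / ((real n + 1) * (real n + 2))"
    unfolding power2_eq_square by (intro divide_left_mono mult_right_mono) auto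
  then have key: "1 / (real n + 2)^2 \<le> 1 / (real n + 1) - 1 / (real n + 2)" using e by simp
  have "(\<Sum>k\<le>Suc n. aa k) = (\<Sum>k\<le>n. aa k) + 1 / (real n + 2)^2"
    by (simp add: aa_def add.commute)
  also have "\<dots> \<le> 2 - 1 / (real n + 1) + (1 / (real n + 1) - 1 / (real n + 2))"
    using Suc key by linarith
  finally show ?case by (simp add: add.commute)
qed

lemma aa_pair: "aa k * aa m \<le> 2 * (aa k + aa m) / (real (k+m) + 2)^2"
proof -
  define x where "x = real k + 1"
  define y where "y = real m + 1"
  have x: "x > 0" and y: "y > 0" by (auto simp: x_def y_def)
  have xy: "real (k+m) + 2 = x + y" by (simp add: x_def y_def)
  have "aa k * aa m = (1/(x*y))^2" by (simp add: aa_def x_def y_def power_divide power_mult_distrib)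
  also have "1/(x*y) = (1/x + 1/y) / (x+y)"
  proof -
    have h: "1/x + 1/y = (x+y)/(x*y)" using x y by (simp add: field_simps)
    show ?thesis using x y unfolding h by simp
  qed
  also have "((1/x + 1/y) / (x+y))^2 = (1/x + 1/y)^2 / (x+y)^2" by (simp add: power_divide)
  also have "\<dots> \<le> 2 * ((1/x)^2 + (1/y)^2) / (x+y)^2"
  proof (rule divide_right_mono)
    have "0 \<le> (1/x - 1/y)^2" by simp
    then show "(1/x + 1/y)^2 \<le> 2 * ((1/x)^2 + (1/y)^2)" by (simp add: power2_eq_square algebra_simps)
  qed simp
  also have "(1/x)^2 = aa k" by (simp add: aa_def x_def power_divide)
  also have "(1/y)^2 = aa m" by (simp add: aa_def y_def power_divide)
  finally show ?thesis using xy by simp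
qed

lemma aa_comb: "(\<Sum>k\<le>n. aa k * aa (n-k)) \<le> 8 * aa n"
proof -
  have "(\<Sum>k\<le>n. aa k * aa (n-k)) \<le> (\<Sum>k\<le>n. 2 * (aa k + aa (n-k)) / (real n + 2)^2)"
  proof (rule sum_mono)
    fix k assume "k \<in> {..n}"
    then have "k + (n-k) = n" by simp
    then show "aa k * aa (n-k) \<le> 2 * (aa k + aa (n-k)) / (real n + 2)^2"
      using aa_pair[of k "n-k"] by simp
  qed
  also have "\<dots> = 2 / (real n + 2)^2 * (\<Sum>k\<le>n. aa k + aa (n-k))"
    unfolding sum_distrib_left by (intro sum.cong) auto
  also have "\<dots> = 2 / (real n + 2)^2 * ((\<Sum>k\<le>n. aa k) + (\<Sum>k\<le>n. aa (n-k)))"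
    by (simp add: sum.distrib)
  also have "(\<Sum>k\<le>n. aa (n-k)) = (\<Sum>k\<le>n. aa k)"
    by (rule sum.reindex_bij_witness[where i="\<lambda>k. n-k" and j="\<lambda>k. n-k"]) auto
  also have "2 / (real n + 2)^2 * ((\<Sum>k\<le>n. aa k) + (\<Sum>k\<le>n. aa k)) \<le> 2 / (real n + 2)^2 * (2 + 2)"
  proof -
    have "0 \<le> 1 / (real n + 1)" by simp
    then have "(\<Sum>k\<le>n. aa k) \<le> 2" using aa_partial[of n] by linarith
    then show ?thesis by (intro mult_left_mono) auto
  qed
  also have "\<dots> = 8 / (real n + 2)^2" by simp
  also have "\<dots> \<le> 8 / (real n + 1)^2"
    by (intro divide_left_mono power_mono) auto
  also have "\<dots> = 8 * aa n" by (simp add: aa_def)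
  finally show ?thesis .
qed

lemma aa_mult: "aa k * aa m \<le> aa (k+m)"
proof -
  have "(real (k+m) + 1) \<le> (real k + 1) * (real m + 1)" by (simp add: algebra_simps)
  then have "(real (k+m) + 1)^2 \<le> ((real k + 1) * (real m + 1))^2"
    by (intro power_mono) auto
  then have "1 / ((real k + 1) * (real m + 1))^2 \<le> 1 / (real (k+m) + 1)^2"
    by (intro divide_left_mono) auto
  then show ?thesis unfolding aa_def by (simp add: power_mult_distrib)
qed

lemma key_comb:
  fixes g :: "nat \<Rightarrow> real"
  assumes g0: "\<And>n. 0 \<le> g n" and sg: "(\<lambda>n. aa n * g n) summable_on UNIV"
  shows "(\<lambda>(k,m). aa k * aa m * g (k+m)) summable_on UNIV"
    and "infsum (\<lambda>(k,m). aa k * aa m * g (k+m)) UNIV \<le> 8 * infsum (\<lambda>n. aa n * g n) UNIV"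
proof -
  define c where "c n = (\<Sum>k\<le>n. aa k * aa (n-k))" for n
  define \<Theta> where "\<Theta> = (\<lambda>(n,k). aa k * aa (n-k) * g n)"
  have inner: "((\<lambda>k. \<Theta> (n,k)) has_sum c n * g n) {..n}" for n
    by (rule has_sum_finiteI) (auto simp: \<Theta>_def c_def sum_distrib_right)
  have cle: "c n * g n \<le> 8 * (aa n * g n)" for n
    using mult_right_mono[OF aa_comb[of n] g0[of n]] unfolding c_def by (simp add: mult.assoc)
  have c0: "0 \<le> c n * g n" for n
  proof -
    have "0 \<le> c n" unfolding c_def using aa_pos by (intro sum_nonneg) (simp add: less_imp_le)
    then show ?thesis using g0[of n] by simp
  qed
  have sc: "(\<lambda>n. c n * g n) summable_on UNIV"
    by (rule summable_on_comparison_test[OF summable_on_cmult_right[OF sg, of 8] cle c0])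
  have sT: "\<Theta> summable_on Sigma UNIV (\<lambda>n. {..n})"
    by (rule summable_on_SigmaI[OF inner sc])
       (auto simp: \<Theta>_def intro!: mult_nonneg_nonneg g0 aa_pos[THEN less_imp_le])
  define T where "T = infsum \<Theta> (Sigma UNIV (\<lambda>n. {..n}))"
  have hT: "(\<Theta> has_sum T) (Sigma UNIV (\<lambda>n. {..n}))" using sT T_def by simp
  have hc: "((\<lambda>n. c n * g n) has_sum T) UNIV"
    by (rule has_sum_SigmaD[OF hT]) (use inner in simp)
  have hm: "((\<lambda>(k,m). aa k * aa m * g (k+m)) has_sum T) UNIV"
    by (subst has_sum_reindex_bij_witness[where j="\<lambda>(k,m). (k+m, k)" and i="\<lambda>(n,k). (k, n-k)"
          and T="Sigma UNIV (\<lambda>n. {..n})" and h=\<Theta> and s'=T])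
       (use hT in \<open>auto simp: \<Theta>_def\<close>)
  then show "(\<lambda>(k,m). aa k * aa m * g (k+m)) summable_on UNIV" by (auto simp: summable_on_def)
  have "infsum (\<lambda>(k,m). aa k * aa m * g (k+m)) UNIV = infsum (\<lambda>n. c n * g n) UNIV"
    using hm hc by (simp add: infsumI)
  also have "\<dots> \<le> infsum (\<lambda>n. 8 * (aa n * g n)) UNIV"
    by (rule infsum_mono[OF sc summable_on_cmult_right[OF sg] cle])
  also have "\<dots> = 8 * infsum (\<lambda>n. aa n * g n) UNIV" by (simp add: infsum_cmult_right')
  finally show "infsum (\<lambda>(k,m). aa k * aa m * g (k+m)) UNIV \<le> 8 * infsum (\<lambda>n. aa n * g n) UNIV" .
qed

definition Fw :: "('a::group_add \<Rightarrow> real) \<Rightarrow> 'a \<Rightarrow> real" where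
  "Fw \<mu> s = infsum (\<lambda>k. aa k * conv_pow \<mu> k s) UNIV"

context
  fixes \<mu> :: "'a::group_add \<Rightarrow> real"
  assumes pm: "prob_fun \<mu>"
begin

lemma Pp: "0 \<le> conv_pow \<mu> n s" "conv_pow \<mu> n s \<le> 1" "conv_pow \<mu> n summable_on UNIV"
    "(conv_pow \<mu> n has_sum 1) UNIV"
  using prob_funD[OF P_prob[OF pm]] by auto

lemma Fk_nonneg: "0 \<le> aa k * conv_pow \<mu> k s"
  using Pp aa_pos[of k] by simp

lemma Fk_summable: "(\<lambda>k. aa k * conv_pow \<mu> k s) summable_on UNIV"
  by (rule summable_on_comparison_test[OF aa_summable])
     (use Pp aa_pos in \<open>auto intro: mult_left_le less_imp_le Fk_nonneg\<close>)

lemma Fw_ge: "aa k * conv_pow \<mu> k s \<le> Fw \<mu> s"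
  unfolding Fw_def by (rule le_infsum_pt[OF Fk_summable Fk_nonneg])

lemma Fw_le: "Fw \<mu> s \<le> infsum aa UNIV"
  unfolding Fw_def by (rule infsum_mono[OF Fk_summable aa_summable])
     (use Pp aa_pos in \<open>auto intro: mult_left_le less_imp_le\<close>)

lemma Fw_nonneg: "0 \<le> Fw \<mu> s"
  unfolding Fw_def by (rule infsum_nonneg) (rule Fk_nonneg)

lemma pos_exists:
  assumes nd: "nondegenerate \<mu>"
  shows "\<exists>n. 0 < conv_pow \<mu> n s"
proof -
  have "s \<in> sgen (supp \<mu>)" using nd by (simp add: nondegenerate_def)
  then show ?thesis
  proof (induction s rule: sgen.induct)
    case (base s)
    have "conv_pow \<mu> 1 s = \<mu> s" using P_1 by metis
    then have "0 < conv_pow \<mu> 1 s" using prob_funD(1)[OF pm, of s] base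
      by (auto simp: supp_def simp del: conv_pow.simps)
    then show ?case by blast
  next
    case (step a b)
    then obtain n m where "0 < conv_pow \<mu> n a" "0 < conv_pow \<mu> m b" by blast
    then have "0 < conv_pow \<mu> n a * conv_pow \<mu> m b" by simp
    also have "\<dots> \<le> conv_pow \<mu> (n+m) (a+b)" by (rule P_mul_le[OF pm])
    finally show ?case by blast
  qed
qed

lemma Fw_pos:
  assumes nd: "nondegenerate \<mu>"
  shows "0 < Fw \<mu> s"
proof -
  obtain n where "0 < conv_pow \<mu> n s" using pos_exists[OF nd] by blast
  then have "0 < aa n * conv_pow \<mu> n s" using aa_pos[of n] by simp
  then show ?thesis using Fw_ge[of n s] by linarith
qed

lemma Fw_mul: "Fw \<mu> s * Fw \<mu> t \<le> 8 * Fw \<mu> (s+t)"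
proof -
  have "Fw \<mu> s * Fw \<mu> t = infsum (\<lambda>(k,m). (aa k * conv_pow \<mu> k s) * (aa m * conv_pow \<mu> m t)) UNIV"
    unfolding Fw_def using prod_summable(2)[OF Fk_summable Fk_summable] by simp
  also have "\<dots> \<le> infsum (\<lambda>(k,m). aa k * aa m * conv_pow \<mu> (k+m) (s+t)) UNIV"
  proof (rule infsum_mono)
    show "(\<lambda>(k,m). (aa k * conv_pow \<mu> k s) * (aa m * conv_pow \<mu> m t)) summable_on UNIV"
      using prod_summable(1)[OF Fk_summable Fk_summable] by simp
    show "(\<lambda>(k,m). aa k * aa m * conv_pow \<mu> (k+m) (s+t)) summable_on UNIV"
      by (rule key_comb(1)[OF Pp(1) Fk_summable])
    fix p :: "nat \<times> nat"
    obtain k m where p: "p = (k,m)" by (cases p)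
    have "aa k * aa m * (conv_pow \<mu> k s * conv_pow \<mu> m t) \<le> aa k * aa m * conv_pow \<mu> (k+m) (s+t)"
      using aa_pos[of k] aa_pos[of m] by (intro mult_left_mono P_mul_le[OF pm]) auto
    then show "(\<lambda>(k,m). (aa k * conv_pow \<mu> k s) * (aa m * conv_pow \<mu> m t)) p
        \<le> (\<lambda>(k,m). aa k * aa m * conv_pow \<mu> (k+m) (s+t)) p"
      by (simp add: p algebra_simps)
  qed
  also have "\<dots> \<le> 8 * Fw \<mu> (s+t)"
    unfolding Fw_def by (rule key_comb(2)[OF Pp(1) Fk_summable])
  finally show ?thesis .
qed

lemma Fw_summable: "Fw \<mu> summable_on UNIV"
proof -
  have "(\<lambda>(k,s). aa k * conv_pow \<mu> k s) summable_on Sigma UNIV (\<lambda>_. UNIV)"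
  proof (rule summable_on_SigmaI[where g=aa])
    fix k :: nat
    show "((\<lambda>s. (\<lambda>(k,s). aa k * conv_pow \<mu> k s) (k, s)) has_sum aa k) UNIV"
      using has_sum_cmult_right[OF Pp(4), of "aa k" k] by simp
  qed (use aa_summable Fk_nonneg in auto)
  then have "(\<lambda>(k,s). aa k * conv_pow \<mu> k s) summable_on UNIV \<times> UNIV" by simp
  then have "(\<lambda>(s,k). aa k * conv_pow \<mu> k s) summable_on UNIV \<times> UNIV"
    by (subst (asm) summable_on_swap) (simp add: case_prod_unfold)
  then have "(\<lambda>(s,k). aa k * conv_pow \<mu> k s) summable_on Sigma UNIV (\<lambda>_. UNIV)" by simp
  from summable_on_SigmaD[OF this] show ?thesis
    unfolding Fw_def using Fk_summable by simp
qed

lemma conv_Fw: "conv (Fw \<mu>) (Fw \<mu>) s \<le> 8 * Fw \<mu> s"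
proof -
  define X where "X t = (\<lambda>(k,m). (aa k * conv_pow \<mu> k t) * (aa m * conv_pow \<mu> m (-t+s)))" for t
  have prodeq: "Fw \<mu> t * Fw \<mu> (-t+s) = infsum (X t) UNIV" for t
    unfolding Fw_def X_def using prod_summable(2)[OF Fk_summable Fk_summable] by simp
  define g where "g = (\<lambda>(k,m). aa k * aa m * conv_pow \<mu> (k+m) s)"
  have inner: "((\<lambda>t. X t p) has_sum g p) UNIV" for p
  proof -
    obtain k m where p: "p = (k,m)" by (cases p)
    have "((\<lambda>t. conv_pow \<mu> k t * conv_pow \<mu> m (-t+s)) has_sum conv (conv_pow \<mu> k) (conv_pow \<mu> m) s) UNIV"
      unfolding conv_def using conv_inner_summable[OF P_prob[OF pm] P_prob[OF pm]] by simp
    then have "((\<lambda>t. conv_pow \<mu> k t * conv_pow \<mu> m (-t+s)) has_sum conv_pow \<mu> (k+m) s) UNIV"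
      by (simp add: P_add[OF pm])
    from has_sum_cmult_right[OF this, of "aa k * aa m"]
    show ?thesis by (simp add: p X_def g_def algebra_simps)
  qed
  have sg: "g summable_on UNIV" unfolding g_def by (rule key_comb(1)[OF Pp(1) Fk_summable])
  have "(\<lambda>(p,t). X t p) summable_on Sigma UNIV (\<lambda>_. UNIV)"
    by (rule summable_on_SigmaI[OF _ sg]) (use inner in \<open>auto simp: X_def case_prod_unfold intro!: mult_nonneg_nonneg Fk_nonneg\<close>)
  then have "(\<lambda>(p,t). X t p) summable_on UNIV \<times> UNIV" by simp
  then have sX: "(\<lambda>(t,p). X t p) summable_on UNIV \<times> UNIV"
    by (subst (asm) summable_on_swap) (simp add: case_prod_unfold)
  have "conv (Fw \<mu>) (Fw \<mu>) s = infsum (\<lambda>t. infsum (X t) UNIV) UNIV"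
    unfolding conv_def prodeq ..
  also have "\<dots> = infsum (\<lambda>p. infsum (\<lambda>t. X t p) UNIV) UNIV"
    by (rule infsum_swap_banach[OF sX])
  also have "(\<lambda>p. infsum (\<lambda>t. X t p) UNIV) = g" by (rule ext) (rule infsumI[OF inner])
  also have "infsum g UNIV \<le> 8 * Fw \<mu> s" unfolding g_def Fw_def by (rule key_comb(2)[OF Pp(1) Fk_summable])
  finally show ?thesis .
qed

end

lemma ln_over_n: "(\<lambda>n. 2 * ln (real n + 1) / real n) \<longlonglongrightarrow> 0"
proof -
  have a: "(\<lambda>n. ln (real (Suc n)) / real (Suc n)) \<longlonglongrightarrow> 0"
    using LIMSEQ_Suc[OF lim_ln_over_n] by simp
  have "(\<lambda>n. 2 * ((ln (real (Suc n)) / real (Suc n)) * (real (Suc n) / real n))) \<longlonglongrightarrow> 2 * (0 * 1)"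
    by (intro tendsto_mult tendsto_const a LIMSEQ_Suc_n_over_n)
  moreover have "(\<lambda>n. 2 * ((ln (real (Suc n)) / real (Suc n)) * (real (Suc n) / real n))) = (\<lambda>n. 2 * ln (real n + 1) / real n)"
  proof (rule ext)
    fix n :: nat
    show "2 * ((ln (real (Suc n)) / real (Suc n)) * (real (Suc n) / real n)) = 2 * ln (real n + 1) / real n"
      by (cases "n = 0") (simp_all add: add.commute)
  qed
  ultimately show ?thesis by simp
qed

lemma ln_aa: "ln (aa n) = - (2 * ln (real n + 1))"
  unfolding aa_def by (simp add: ln_div ln_realpow)

theorem theorem4p7:
  fixes \<mu> :: "'a::{group_add, countable} \<Rightarrow> real"
  assumes "prob_fun \<mu>" and "nondegenerate \<mu>" and "finite_entropy \<mu>"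
  shows "\<exists>h::real. avez_seq \<mu> \<longlonglongrightarrow> h
      \<and> h = (INF \<omega>\<in>Omega \<mu>. lyapunov \<omega> \<mu>)
      \<and> (\<forall>\<omega>\<in>Omega \<mu>. h \<le> lyapunov \<omega> \<mu>)
      \<and> (\<exists>\<omega>b\<in>Omega \<mu>. (\<exists>d>0. \<forall>s. conv (\<lambda>t. 1 / \<omega>b t) (\<lambda>t. 1 / \<omega>b t) s \<le> d * (1 / \<omega>b s))
             \<and> lyap_seq \<omega>b \<mu> \<longlonglongrightarrow> h \<and> lyapunov \<omega>b \<mu> = h)"
proof -
  note pm = assms(1) and nd = assms(2) and fe = assms(3)
  define \<omega>b where "\<omega>b s = 1 / Fw \<mu> s" for s
  define Sa where "Sa = infsum aa UNIV"
  have Fpos: "0 < Fw \<mu> s" for s by (rule Fw_pos[OF pm nd])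
  have FSa: "Fw \<mu> s \<le> Sa" for s unfolding Sa_def by (rule Fw_le[OF pm])
  have Sa0: "0 < Sa" using Fpos[of 0] FSa[of 0] by linarith
  have inv\<omega>: "1 / \<omega>b s = Fw \<mu> s" for s by (simp add: \<omega>b_def)
  have inv\<omega>': "(\<lambda>s. 1 / \<omega>b s) = Fw \<mu>" using inv\<omega> by auto
  have wpos: "0 < \<omega>b s" for s using Fpos[of s] by (simp add: \<omega>b_def)
  have isw1: "\<exists>a>0. \<forall>s. a \<le> \<omega>b s"
  proof (intro exI[of _ "1/Sa"] conjI allI)
    show "0 < 1 / Sa" using Sa0 by simp
    fix s show "1 / Sa \<le> \<omega>b s" unfolding \<omega>b_def
      using Fpos[of s] FSa[of s] by (intro divide_left_mono) auto
  qed
  have isw2: "\<exists>C>0. \<forall>s t. \<omega>b (s + t) \<le> C * \<omega>b s * \<omega>b t"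
  proof (intro exI[of _ 8] conjI allI)
    show "(0::real) < 8" by simp
    fix s t
    have m: "Fw \<mu> s * Fw \<mu> t \<le> 8 * Fw \<mu> (s+t)" by (rule Fw_mul[OF pm])
    show "\<omega>b (s + t) \<le> 8 * \<omega>b s * \<omega>b t"
    proof -
      have p: "0 < Fw \<mu> s * Fw \<mu> t" using Fpos[of s] Fpos[of t] by simp
      have "1 / Fw \<mu> (s+t) = 8 / (8 * Fw \<mu> (s+t))" using Fpos[of "s+t"] by simp
      also have "\<dots> \<le> 8 / (Fw \<mu> s * Fw \<mu> t)"
        by (rule divide_left_mono[OF m]) (use p Fpos[of "s+t"] in auto)
      also have "\<dots> = 8 * (1 / Fw \<mu> s) * (1 / Fw \<mu> t)" by simp
      finally show ?thesis unfolding \<omega>b_def .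
    qed
  qed
  have isw: "is_weight \<omega>b" unfolding is_weight_def by (rule conjI[OF isw1 isw2])
  have lm: "log_moment_finite \<mu> \<omega>b"
  proof -
    define c where "c = ln 4 + \<bar>ln Sa\<bar>"
    have g: "(\<lambda>s. norm (\<mu> s * ln (\<mu> s)) + \<mu> s * c) summable_on UNIV"
    proof (rule summable_on_add)
      show "(\<lambda>s. norm (\<mu> s * ln (\<mu> s))) summable_on UNIV"
        using fe unfolding finite_entropy_def by (rule summable_on_iff_abs_summable_on_real[THEN iffD1])
      show "(\<lambda>s. \<mu> s * c) summable_on UNIV" by (rule summable_on_cmult_left[OF prob_funD(3)[OF pm]])
    qed
    have bnd: "norm (\<mu> s * ln (\<omega>b s)) \<le> norm (\<mu> s * ln (\<mu> s)) + \<mu> s * c" for s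
    proof (cases "\<mu> s = 0")
      case True then show ?thesis by simp
    next
      case False
      then have mu: "0 < \<mu> s" using prob_funD(1)[OF pm, of s] by simp
      have f1: "aa 1 * conv_pow \<mu> 1 s \<le> Fw \<mu> s" by (rule Fw_ge[OF pm])
      have c1: "conv_pow \<mu> 1 s = \<mu> s" using P_1 by metis
      have a1: "aa 1 = 1/4" by (simp add: aa_def)
      have "aa 1 * conv_pow \<mu> 1 s = \<mu> s / 4" unfolding a1 c1 by simp
      then have lo: "\<mu> s / 4 \<le> Fw \<mu> s" using f1 by simp
      have "ln (\<mu> s / 4) \<le> ln (Fw \<mu> s)" using lo mu Fpos[of s] by simp
      then have l1: "ln (\<mu> s) - ln 4 \<le> ln (Fw \<mu> s)" using mu by (simp add: ln_div)
      have l2: "ln (Fw \<mu> s) \<le> ln Sa" using FSa[of s] Fpos[of s] by simp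
      have "\<bar>ln (\<omega>b s)\<bar> = \<bar>ln (Fw \<mu> s)\<bar>" unfolding \<omega>b_def using Fpos[of s] by (simp add: ln_div)
      also have "\<dots> \<le> \<bar>ln (\<mu> s)\<bar> + c"
      proof (rule abs_leI)
        have "0 \<le> ln (4::real)" by simp
        then show "ln (Fw \<mu> s) \<le> \<bar>ln (\<mu> s)\<bar> + c" "- ln (Fw \<mu> s) \<le> \<bar>ln (\<mu> s)\<bar> + c"
          unfolding c_def using l1 l2 abs_ge_self[of "ln Sa"] abs_ge_minus_self[of "ln (\<mu> s)"]
            abs_ge_zero[of "ln (\<mu> s)"] abs_ge_zero[of "ln Sa"] by linarith+
      qed
      finally have "\<mu> s * \<bar>ln (\<omega>b s)\<bar> \<le> \<mu> s * (\<bar>ln (\<mu> s)\<bar> + c)" using mu by (intro mult_left_mono) auto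
      then show ?thesis using mu by (simp add: abs_mult algebra_simps)
    qed
    have "(\<lambda>s. norm (\<mu> s * ln (\<omega>b s))) summable_on UNIV"
      by (rule Infinite_Sum.abs_summable_on_comparison_test'[OF g]) (rule bnd)
    then show ?thesis unfolding log_moment_finite_def by (rule abs_summable_summable)
  qed
  have il1: "inv_l1 \<omega>b" unfolding inv_l1_def inv\<omega>' by (rule Fw_summable[OF pm])
  have inO: "\<omega>b \<in> Omega \<mu>" using isw lm il1 by (simp add: Omega_def)
  have convc: "\<exists>d>0. \<forall>s. conv (\<lambda>t. 1 / \<omega>b t) (\<lambda>t. 1 / \<omega>b t) s \<le> d * (1 / \<omega>b s)"
    by (rule exI[of _ 8]) (simp add: inv\<omega>' inv\<omega> conv_Fw[OF pm])
  obtain L where L: "lyap_seq \<omega>b \<mu> \<longlonglongrightarrow> L" using lyap_converges[OF pm isw lm] by blast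
  have lyq: "lyap_seq \<omega> \<mu> n = Aw \<omega> \<mu> n / real n" for \<omega> n by (simp add: lyap_seq_def Aw_def)
  have gib: "shannon_entropy (conv_pow \<mu> n) \<le> Aw \<omega> \<mu> n + infsum (\<lambda>s. 1 / \<omega> s) UNIV - 1"
    and gibs: "(\<lambda>s. conv_pow \<mu> n s * ln (conv_pow \<mu> n s)) summable_on UNIV"
    if "\<omega> \<in> Omega \<mu>" for \<omega> n
  proof -
    from that have w: "is_weight \<omega>" and l: "log_moment_finite \<mu> \<omega>" and i: "inv_l1 \<omega>"
      by (auto simp: Omega_def)
    obtain a C where wp: "\<And>s. 0 < \<omega> s" using weight_props[OF w] by blast
    show "shannon_entropy (conv_pow \<mu> n) \<le> Aw \<omega> \<mu> n + infsum (\<lambda>s. 1 / \<omega> s) UNIV - 1"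
      using gibbs(2)[OF P_prob[OF pm] wp A_summable[OF pm w l] i[unfolded inv_l1_def]]
      unfolding Aw_def .
    show "(\<lambda>s. conv_pow \<mu> n s * ln (conv_pow \<mu> n s)) summable_on UNIV"
      using gibbs(1)[OF P_prob[OF pm] wp A_summable[OF pm w l] i[unfolded inv_l1_def]] .
  qed
  have lowb: "Aw \<omega>b \<mu> n \<le> shannon_entropy (conv_pow \<mu> n) + 2 * ln (real n + 1)" for n
  proof -
    note Pn = prob_funD[OF P_prob[OF pm, of n]]
    have pt: "conv_pow \<mu> n s * ln (\<omega>b s) \<le> - (conv_pow \<mu> n s * ln (conv_pow \<mu> n s)) + conv_pow \<mu> n s * (2 * ln (real n + 1))" for s
    proof (cases "conv_pow \<mu> n s = 0")
      case True then show ?thesis by simp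
    next
      case False
      then have p: "0 < conv_pow \<mu> n s" using Pn(1)[of s] by simp
      have "aa n * conv_pow \<mu> n s \<le> Fw \<mu> s" by (rule Fw_ge[OF pm])
      then have "ln (aa n * conv_pow \<mu> n s) \<le> ln (Fw \<mu> s)" using p aa_pos[of n] Fpos[of s] by simp
      then have "ln (aa n) + ln (conv_pow \<mu> n s) \<le> ln (Fw \<mu> s)" using p aa_pos[of n] by (simp add: ln_mult)
      then have "ln (\<omega>b s) \<le> 2 * ln (real n + 1) - ln (conv_pow \<mu> n s)"
        unfolding \<omega>b_def using Fpos[of s] by (simp add: ln_div ln_aa)
      then have "conv_pow \<mu> n s * ln (\<omega>b s) \<le> conv_pow \<mu> n s * (2 * ln (real n + 1) - ln (conv_pow \<mu> n s))"
        using p by (intro mult_left_mono) auto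
      then show ?thesis by (simp add: algebra_simps)
    qed
    have s1: "(\<lambda>s. - (conv_pow \<mu> n s * ln (conv_pow \<mu> n s))) summable_on UNIV"
      by (rule summable_on_uminus[THEN iffD2, OF gibs[OF inO, of n]])
    have s2: "(\<lambda>s. conv_pow \<mu> n s * (2 * ln (real n + 1))) summable_on UNIV"
      by (rule summable_on_cmult_left[OF Pn(3)])
    have "Aw \<omega>b \<mu> n \<le> infsum (\<lambda>s. - (conv_pow \<mu> n s * ln (conv_pow \<mu> n s)) + conv_pow \<mu> n s * (2 * ln (real n + 1))) UNIV"
      unfolding Aw_def by (rule infsum_mono[OF A_summable[OF pm isw lm] summable_on_add[OF s1 s2] pt])
    also have "\<dots> = shannon_entropy (conv_pow \<mu> n) + 2 * ln (real n + 1)"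
      using infsum_add[OF s1 s2] Pn(4) unfolding shannon_entropy_def
      by (simp add: infsum_uminus infsum_cmult_left')
    finally show ?thesis .
  qed
  have avez: "avez_seq \<mu> \<longlonglongrightarrow> L"
  proof (rule tendsto_sandwich[where f="\<lambda>n. lyap_seq \<omega>b \<mu> n - 2 * ln (real n + 1) / real n"
        and h="\<lambda>n. lyap_seq \<omega>b \<mu> n + (infsum (\<lambda>s. 1 / \<omega>b s) UNIV - 1) / real n"])
    show "\<forall>\<^sub>F n in sequentially. lyap_seq \<omega>b \<mu> n - 2 * ln (real n + 1) / real n \<le> avez_seq \<mu> n"
    proof (rule eventually_sequentiallyI[of 1])
      fix n :: nat assume n: "1 \<le> n"
      have "(Aw \<omega>b \<mu> n - 2 * ln (real n + 1)) / real n \<le> shannon_entropy (conv_pow \<mu> n) / real n"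
        using lowb[of n] n by (intro divide_right_mono) auto
      then show "lyap_seq \<omega>b \<mu> n - 2 * ln (real n + 1) / real n \<le> avez_seq \<mu> n"
        by (simp add: lyq avez_seq_def diff_divide_distrib)
    qed
    show "\<forall>\<^sub>F n in sequentially. avez_seq \<mu> n \<le> lyap_seq \<omega>b \<mu> n + (infsum (\<lambda>s. 1 / \<omega>b s) UNIV - 1) / real n"
    proof (rule eventually_sequentiallyI[of 1])
      fix n :: nat assume n: "1 \<le> n"
      have "shannon_entropy (conv_pow \<mu> n) / real n \<le> (Aw \<omega>b \<mu> n + (infsum (\<lambda>s. 1 / \<omega>b s) UNIV - 1)) / real n"
        using gib[OF inO, of n] n by (intro divide_right_mono) auto
      then show "avez_seq \<mu> n \<le> lyap_seq \<omega>b \<mu> n + (infsum (\<lambda>s. 1 / \<omega>b s) UNIV - 1) / real n"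
        by (simp add: lyq avez_seq_def add_divide_distrib)
    qed
    show "(\<lambda>n. lyap_seq \<omega>b \<mu> n - 2 * ln (real n + 1) / real n) \<longlonglongrightarrow> L"
      using tendsto_diff[OF L ln_over_n] by simp
    show "(\<lambda>n. lyap_seq \<omega>b \<mu> n + (infsum (\<lambda>s. 1 / \<omega>b s) UNIV - 1) / real n) \<longlonglongrightarrow> L"
      using tendsto_add[OF L lim_const_over_n] by simp
  qed
  have lyb: "lyapunov \<omega>b \<mu> = L" unfolding lyapunov_def using L by (rule limI)
  have allle: "\<forall>\<omega>\<in>Omega \<mu>. L \<le> lyapunov \<omega> \<mu>"
  proof
    fix \<omega> assume o: "\<omega> \<in> Omega \<mu>"
    then have w: "is_weight \<omega>" and l: "log_moment_finite \<mu> \<omega>" by (auto simp: Omega_def)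
    obtain L' where L': "lyap_seq \<omega> \<mu> \<longlonglongrightarrow> L'" using lyap_converges[OF pm w l] by blast
    have "(\<lambda>n. lyap_seq \<omega> \<mu> n + (infsum (\<lambda>s. 1 / \<omega> s) UNIV - 1) / real n) \<longlonglongrightarrow> L' + 0"
      by (rule tendsto_add[OF L' lim_const_over_n])
    moreover have "\<forall>\<^sub>F n in sequentially. avez_seq \<mu> n \<le> lyap_seq \<omega> \<mu> n + (infsum (\<lambda>s. 1 / \<omega> s) UNIV - 1) / real n"
    proof (rule eventually_sequentiallyI[of 1])
      fix n :: nat assume n: "1 \<le> n"
      have "shannon_entropy (conv_pow \<mu> n) / real n \<le> (Aw \<omega> \<mu> n + (infsum (\<lambda>s. 1 / \<omega> s) UNIV - 1)) / real n"
        using gib[OF o, of n] n by (intro divide_right_mono) auto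
      then show "avez_seq \<mu> n \<le> lyap_seq \<omega> \<mu> n + (infsum (\<lambda>s. 1 / \<omega> s) UNIV - 1) / real n"
        by (simp add: lyq avez_seq_def add_divide_distrib)
    qed
    ultimately have "L \<le> L' + 0" using avez by (intro tendsto_le[OF _ _ avez]) auto
    moreover have "lyapunov \<omega> \<mu> = L'" unfolding lyapunov_def using L' by (rule limI)
    ultimately show "L \<le> lyapunov \<omega> \<mu>" by simp
  qed
  have inf: "L = (INF \<omega>\<in>Omega \<mu>. lyapunov \<omega> \<mu>)"
  proof (rule antisym)
    show "L \<le> (INF \<omega>\<in>Omega \<mu>. lyapunov \<omega> \<mu>)"
      using inO allle by (intro cINF_greatest) auto
    have "bdd_below ((\<lambda>\<omega>. lyapunov \<omega> \<mu>) ` Omega \<mu>)" using allle by (intro bdd_belowI[of _ L]) auto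
    then have "(INF \<omega>\<in>Omega \<mu>. lyapunov \<omega> \<mu>) \<le> lyapunov \<omega>b \<mu>" using inO by (intro cINF_lower)
    then show "(INF \<omega>\<in>Omega \<mu>. lyapunov \<omega> \<mu>) \<le> L" using lyb by simp
  qed
  show ?thesis
    using avez inf allle inO convc L lyb by blast
qed

end
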